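(* Under the standing setup, define for $x\in\mathcal{B}$ $$f_h(x):=T_x^{-1}\left[T_{P(x)}\,DP_x\,T_x^{-1}\right]^\dagger T_{P(x)}\,g(P(x)).$$ Then $DP_x f_h(x)=g(P(x))$ for every $x\in\mathcal{B}$ (i.e. $f_h$ is a lift of $g$), and $f_h(x)=g(x)$ for every $x\in\mathcal{M}$.
   Context: Standing setup: integers $0<k<n$, $r\ge1$. $\tilde{\mathcal M}$ is a compact connected $k$-dimensional $C^r$ manifold with a $C^r$ vector field $\tilde g$. $\mathcal{B}\subseteq\mathbb{R}^n$ is a connected open set with the Euclidean inner product $\langle\cdot,\cdot\rangle$ and norm $\|\cdot\|$; tangent spaces are identified with $\mathbb{R}^n$. $F:\tilde{\mathcal M}\to\mathcal{B}$ is a proper $C^r$ embedding, $\mathcal{M}:=F(\tilde{\mathcal M})$, and $g$ is the vector field on $\mathcal{M}$ with $g(F(p))=DF_p\tilde g(p)$. (A1) $G:\mathcal{B}\to\mathbb{R}^{n-k}$ is a $C^r$ submersion with $G^{-1}(0)=\mathcal{M}$. (A2) $\tilde P:\mathcal{B}\to\tilde{\mathcal M}$ is $C^r$ with $\tilde P|_{\mathcal M}=F^{-1}$; $P:=F\circ\tilde P:\mathcal{B}\to\mathcal{B}$. (A3) $\mathbb{R}^n=\ker DP_x\oplus\ker DG_x$ for every $x\in\mathcal{B}$. For a linear map $L$ between Euclidean spaces, $L^\dagger$ denotes its Moore–Penrose pseudoinverse. $T_x:=\left[I-DG_x^\dagger DG_x\right]DP_x^\dagger DP_x+DG_x^\dagger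 DG_x$, which is an invertible linear map of $\mathbb{R}^n$ for every $x\in\mathcal{B}$. *)

theory Defs
  imports "HOL-Analysis.Analysis"
begin

definition mp_pinv :: "('a::euclidean_space \<Rightarrow> 'b::euclidean_space) \<Rightarrow> ('b \<Rightarrow> 'a)" where
  "mp_pinv L = (THE L'. linear L' \<and> L \<circ> L' \<circ> L = L \<and> L' \<circ> L \<circ> L' = L'
      \<and> adjoint (L \<circ> L') = L \<circ> L' \<and> adjoint (L' \<circ> L) = L' \<circ> L)"

definition C1_on :: "'a::euclidean_space set \<Rightarrow> ('a \<Rightarrow> 'b::euclidean_space) \<Rightarrow> bool" where
  "C1_on S f \<longleftrightarrow> (\<exists>f'. (\<forall>x\<in>S. (f has_derivative blinfun_apply (f' x)) (at x))
                        \<and> continuous_on S f')"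

definition tangent_space :: "'a::euclidean_space set \<Rightarrow> 'a \<Rightarrow> 'a set" where
  "tangent_space M x = {v. \<exists>\<gamma>::real \<Rightarrow> 'a. \<gamma> 0 = x \<and> (\<forall>t. \<gamma> t \<in> M)
                                \<and> (\<gamma> has_vector_derivative v) (at 0)}"

definition Tmap :: "('a::euclidean_space \<Rightarrow> 'a) \<Rightarrow> ('a \<Rightarrow> 'b::euclidean_space) \<Rightarrow> 'a \<Rightarrow> 'a \<Rightarrow> 'a" where
  "Tmap P G x = (let DP = frechet_derivative P (at x); DG = frechet_derivative G (at x) in
     (\<lambda>v. (mp_pinv DP (DP v) - mp_pinv DG (DG (mp_pinv DP (DP v))))
          + mp_pinv DG (DG v)))"

definition f_h :: "('a::euclidean_space \<Rightarrow> 'a) \<Rightarrow> ('a \<Rightarrow> 'b::euclidean_space) \<Rightarrow> ('a \<Rightarrow> 'a) \<Rightarrow> 'a \<Rightarrow> 'a" where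
  "f_h P G g x = (let DP = frechet_derivative P (at x); Tx = Tmap P G x; TPx = Tmap P G (P x) in
     inv Tx (mp_pinv (TPx \<circ> DP \<circ> inv Tx) (TPx (g (P x)))))"

end

theory Submission imports Defs begin
definition mpok :: "('a::euclidean_space \<Rightarrow> 'b::euclidean_space) \<Rightarrow> 'b \<Rightarrow> 'a \<Rightarrow> bool" where
 "mpok L y v \<longleftrightarrow> (\<forall>w. L w = 0 \<longrightarrow> v \<bullet> w = 0) \<and> (\<forall>w. (y - L v) \<bullet> L w = 0)"

lemma mpok_unique:
  assumes L: "linear L" and 1: "mpok L y v1" and 2: "mpok L y v2"
  shows "v1 = v2"
proof -
  interpret linear L by fact
  have e: "L (v1 - v2) = (y - L v2) - (y - L v1)" by (simp add: diff)
  have e1: "(y - L v1) \<bullet> L (v1 - v2) = 0" "(y - L v2) \<bullet> L (v1 - v2) = 0"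
    using 1 2 unfolding mpok_def by blast+
  have "((y - L v2) - (y - L v1)) \<bullet> L (v1 - v2) = (y - L v2) \<bullet> L (v1 - v2) - (y - L v1) \<bullet> L (v1 - v2)"
    by (rule inner_diff_left)
  also have "\<dots> = 0" using e1 by simp
  finally have "((y - L v2) - (y - L v1)) \<bullet> L (v1 - v2) = 0" .
  hence "L (v1 - v2) \<bullet> L (v1 - v2) = 0" by (metis e)
  hence k: "L (v1 - v2) = 0" by simp
  hence "v1 \<bullet> (v1 - v2) = 0" "v2 \<bullet> (v1 - v2) = 0" using 1 2 unfolding mpok_def by auto
  hence "(v1 - v2) \<bullet> (v1 - v2) = 0" by (simp add: inner_diff_left)
  thus ?thesis by simp
qed

lemma mpok_exists:
  assumes L: "linear L"
  shows "\<exists>v. mpok L y v"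
proof -
  interpret linear L by fact
  have sR: "subspace (range L)" by (simp add: linear_subspace_image L)
  obtain u z where u: "u \<in> span (range L)" and z: "\<And>w. w \<in> span (range L) \<Longrightarrow> orthogonal z w"
     and yz: "y = u + z" using orthogonal_subspace_decomp_exists by metis
  have "u \<in> range L" using u sR by (metis span_eq_iff)
  then obtain w0 where w0: "u = L w0" by auto
  have sK: "subspace {x. L x = 0}" unfolding subspace_def by (simp add: add scale zero)
  obtain a b where a: "a \<in> span {x. L x = 0}" and b: "\<And>w. w \<in> span {x. L x = 0} \<Longrightarrow> orthogonal b w"
     and ab: "w0 = a + b" using orthogonal_subspace_decomp_exists by metis
  have La: "L a = 0" using a sK by (metis span_eq_iff mem_Collect_eq)
  have Lb: "L b = u" using w0 ab La by (simp add: add)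
  show ?thesis
  proof (intro exI)
    show "mpok L y b" unfolding mpok_def
    proof (intro conjI allI impI)
      fix w assume "L w = 0" thus "b \<bullet> w = 0" using b[of w] sK by (metis span_eq_iff mem_Collect_eq orthogonal_def)
    next
      fix w have "L w \<in> span (range L)" using sR by (metis span_eq_iff rangeI)
      thus "(y - L b) \<bullet> L w = 0" using z[of "L w"] yz Lb
        by (simp add: orthogonal_def)
    qed
  qed
qed

definition mp0 :: "('a::euclidean_space \<Rightarrow> 'b::euclidean_space) \<Rightarrow> 'b \<Rightarrow> 'a" where
  "mp0 L y = (SOME v. mpok L y v)"

lemma mp0_ok: "linear L \<Longrightarrow> mpok L y (mp0 L y)"
  unfolding mp0_def by (rule someI_ex[OF mpok_exists])

lemma mp0_linear: assumes L: "linear L" shows "linear (mp0 L)"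
proof -
  interpret linear L by fact
  have *: "mp0 L (c *\<^sub>R y1 + y2) = c *\<^sub>R mp0 L y1 + mp0 L y2" for c y1 y2
  proof (rule mpok_unique[OF L mp0_ok[OF L]])
    have 1: "mpok L y1 (mp0 L y1)" and 2: "mpok L y2 (mp0 L y2)" using mp0_ok[OF L] by auto
    show "mpok L (c *\<^sub>R y1 + y2) (c *\<^sub>R mp0 L y1 + mp0 L y2)"
      unfolding mpok_def
    proof (intro conjI allI impI)
      fix w assume "L w = 0"
      thus "(c *\<^sub>R mp0 L y1 + mp0 L y2) \<bullet> w = 0" using 1 2 unfolding mpok_def
        by (simp add: inner_add_left)
    next
      fix w
      have eq: "c *\<^sub>R y1 + y2 - L (c *\<^sub>R mp0 L y1 + mp0 L y2) = c *\<^sub>R (y1 - L (mp0 L y1)) + (y2 - L (mp0 L y2))"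
        by (simp add: add scale algebra_simps)
      have "(c *\<^sub>R y1 + y2 - L (c *\<^sub>R mp0 L y1 + mp0 L y2)) \<bullet> L w = (c *\<^sub>R (y1 - L (mp0 L y1)) + (y2 - L (mp0 L y2))) \<bullet> L w"
        by (simp only: eq)
      also have "\<dots> = c * ((y1 - L (mp0 L y1)) \<bullet> L w) + (y2 - L (mp0 L y2)) \<bullet> L w"
        by (simp only: inner_add_left inner_scaleR_left)
      also have "\<dots> = 0" using 1 2 unfolding mpok_def by simp
      finally show "(c *\<^sub>R y1 + y2 - L (c *\<^sub>R mp0 L y1 + mp0 L y2)) \<bullet> L w = 0" .
    qed
  qed
  have z: "mp0 L 0 = 0" using *[of 1 0 0] by simp
  show ?thesis
  proof (rule linearI)
    fix b1 b2 show "mp0 L (b1 + b2) = mp0 L b1 + mp0 L b2" using *[of 1 b1 b2] by simp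
  next
    fix r b show "mp0 L (r *\<^sub>R b) = r *\<^sub>R mp0 L b" using *[of r b 0] z by simp
  qed
qed

lemma adjoint_self_iff:
  fixes f :: "'a::euclidean_space \<Rightarrow> 'a"
  assumes "linear f"
  shows "adjoint f = f \<longleftrightarrow> (\<forall>x y. f x \<bullet> y = x \<bullet> f y)"
proof
  assume "adjoint f = f"
  thus "\<forall>x y. f x \<bullet> y = x \<bullet> f y" using adjoint_works[OF assms] by metis
next
  assume "\<forall>x y. f x \<bullet> y = x \<bullet> f y"
  thus "adjoint f = f" by (rule adjoint_unique)
qed

lemma mp0_LML: assumes L: "linear L" shows "L (mp0 L (L x)) = L x"
proof -
  interpret linear L by fact
  have "(L x - L (mp0 L (L x))) \<bullet> L (x - mp0 L (L x)) = 0"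
    using mp0_ok[OF L, of "L x"] unfolding mpok_def by blast
  hence "(L x - L (mp0 L (L x))) \<bullet> (L x - L (mp0 L (L x))) = 0" by (simp add: diff)
  thus ?thesis by simp
qed

lemma mp0_MLM: assumes L: "linear L" shows "mp0 L (L (mp0 L y)) = mp0 L y"
proof (rule mpok_unique[OF L mp0_ok[OF L]])
  show "mpok L (L (mp0 L y)) (mp0 L y)" using mp0_ok[OF L, of y] unfolding mpok_def by simp
qed

lemma mp0_sym1: assumes L: "linear L" shows "L (mp0 L y) \<bullet> z = y \<bullet> L (mp0 L z)"
proof -
  have a: "(y - L (mp0 L y)) \<bullet> L (mp0 L z) = 0" "(z - L (mp0 L z)) \<bullet> L (mp0 L y) = 0"
    using mp0_ok[OF L] unfolding mpok_def by blast+
  hence "y \<bullet> L (mp0 L z) = L (mp0 L y) \<bullet> L (mp0 L z)" "z \<bullet> L (mp0 L y) = L (mp0 L z) \<bullet> L (mp0 L y)"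
    by (simp_all add: inner_diff_left)
  thus ?thesis by (simp add: inner_commute)
qed

lemma mp0_sym2: assumes L: "linear L" shows "mp0 L (L x) \<bullet> w = x \<bullet> mp0 L (L w)"
proof -
  interpret linear L by fact
  have k: "L (w - mp0 L (L w)) = 0" "L (x - mp0 L (L x)) = 0" using mp0_LML[OF L] by (simp_all add: diff)
  have "mp0 L (L x) \<bullet> (w - mp0 L (L w)) = 0" "mp0 L (L w) \<bullet> (x - mp0 L (L x)) = 0"
    using mp0_ok[OF L] k unfolding mpok_def by blast+
  hence "mp0 L (L x) \<bullet> w = mp0 L (L x) \<bullet> mp0 L (L w)" "mp0 L (L w) \<bullet> x = mp0 L (L w) \<bullet> mp0 L (L x)"
    by (simp_all add: inner_diff_right)
  thus ?thesis by (simp add: inner_commute)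
qed

lemma mp_pinv_eq: assumes L: "linear L" shows "mp_pinv L = mp0 L"
  unfolding mp_pinv_def
proof (rule the_equality)
  have lM: "linear (mp0 L)" by (rule mp0_linear[OF L])
  show "linear (mp0 L) \<and> L \<circ> mp0 L \<circ> L = L \<and> mp0 L \<circ> L \<circ> mp0 L = mp0 L \<and>
    adjoint (L \<circ> mp0 L) = L \<circ> mp0 L \<and> adjoint (mp0 L \<circ> L) = mp0 L \<circ> L"
  proof (intro conjI)
    show "L \<circ> mp0 L \<circ> L = L" using mp0_LML[OF L] by (simp add: fun_eq_iff)
    show "mp0 L \<circ> L \<circ> mp0 L = mp0 L" using mp0_MLM[OF L] by (simp add: fun_eq_iff)
    show "adjoint (L \<circ> mp0 L) = L \<circ> mp0 L"
      using adjoint_self_iff[OF linear_compose[OF lM L]] mp0_sym1[OF L] by simp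
    show "adjoint (mp0 L \<circ> L) = mp0 L \<circ> L"
      using adjoint_self_iff[OF linear_compose[OF L lM]] mp0_sym2[OF L] by simp
  qed (rule lM)
next
  fix L' assume a: "linear L' \<and> L \<circ> L' \<circ> L = L \<and> L' \<circ> L \<circ> L' = L' \<and>
    adjoint (L \<circ> L') = L \<circ> L' \<and> adjoint (L' \<circ> L) = L' \<circ> L"
  hence l': "linear L'" by blast
  interpret linear L by fact
  interpret l': linear L' by fact
  have s1: "L (L' a) \<bullet> b = a \<bullet> L (L' b)" for a b
    using a adjoint_self_iff[OF linear_compose[OF l' L]] by simp
  have s2: "L' (L a) \<bullet> b = a \<bullet> L' (L b)" for a b
    using a adjoint_self_iff[OF linear_compose[OF L l']] by simp
  have e1: "L (L' (L x)) = L x" for x using a by (simp add: fun_eq_iff)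
  have e2: "L' (L (L' x)) = L' x" for x using a by (simp add: fun_eq_iff)
  have ok: "mpok L y (L' y)" for y unfolding mpok_def
  proof (intro conjI allI impI)
    fix w assume "L w = 0"
    have "L' y \<bullet> w = L' (L (L' y)) \<bullet> w" by (simp add: e2)
    also have "\<dots> = L' y \<bullet> L' (L w)" by (rule s2)
    also have "\<dots> = 0" using \<open>L w = 0\<close> by (simp add: l'.zero)
    finally show "L' y \<bullet> w = 0" .
  next
    fix w
    have "L (L' y) \<bullet> L w = y \<bullet> L (L' (L w))" by (rule s1)
    also have "\<dots> = y \<bullet> L w" by (simp add: e1)
    finally show "(y - L (L' y)) \<bullet> L w = 0" by (simp add: inner_diff_left)
  qed
  show "L' = mp0 L"
    by (rule ext, rule mpok_unique[OF L ok mp0_ok[OF L]])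
qed

lemma mp_pinv_ok: "linear L \<Longrightarrow> mpok L y (mp_pinv L y)"
  by (simp add: mp_pinv_eq mp0_ok)
lemma mp_pinv_linear: "linear L \<Longrightarrow> linear (mp_pinv L)"
  by (simp add: mp_pinv_eq mp0_linear)
lemma mp_pinv_LML: "linear L \<Longrightarrow> L (mp_pinv L (L x)) = L x"
  by (simp add: mp_pinv_eq mp0_LML)

lemma mp_pinv_proj:
  fixes L :: "'a::euclidean_space \<Rightarrow> 'a"
  assumes L: "linear L" and idem: "\<And>x. L (L x) = L x" and sym: "\<And>x y. L x \<bullet> y = x \<bullet> L y"
  shows "mp_pinv L y = L y"
proof (rule mpok_unique[OF L mp_pinv_ok[OF L]])
  interpret linear L by fact
  show "mpok L y (L y)" unfolding mpok_def
  proof (intro conjI allI impI)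
    fix w assume "L w = 0" thus "L y \<bullet> w = 0" by (simp add: sym)
  next
    fix w
    have "(y - L (L y)) \<bullet> L w = L (y - L (L y)) \<bullet> w" by (simp add: sym)
    thus "(y - L (L y)) \<bullet> L w = 0" by (simp add: diff idem)
  qed
qed

definition Tab :: "('a::euclidean_space \<Rightarrow> 'a) \<Rightarrow> ('a \<Rightarrow> 'b::euclidean_space) \<Rightarrow> 'a \<Rightarrow> 'a" where
  "Tab DP DG v = (mp_pinv DP (DP v) - mp_pinv DG (DG (mp_pinv DP (DP v)))) + mp_pinv DG (DG v)"

lemma Tmap_Tab: "Tmap P G x = Tab (frechet_derivative P (at x)) (frechet_derivative G (at x))"
  unfolding Tmap_def Tab_def Let_def by (rule ext) simp

lemma Q_ker: assumes L: "linear L" and "L w = 0" shows "mp_pinv L (L v) \<bullet> w = 0"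
  using mp_pinv_ok[OF L, of "L v"] assms(2) unfolding mpok_def by blast

lemma Q_zero: assumes L: "linear L" and "L v = 0" shows "mp_pinv L (L v) = 0"
proof -
  have "L (mp_pinv L (L v)) = 0" using mp_pinv_LML[OF L] assms(2) by metis
  hence "mp_pinv L (L v) \<bullet> mp_pinv L (L v) = 0" using Q_ker[OF L] by blast
  thus ?thesis by simp
qed

locale Tsetup =
  fixes DP :: "'a::euclidean_space \<Rightarrow> 'a" and DG :: "'a \<Rightarrow> 'b::euclidean_space"
  assumes lP: "linear DP" and lG: "linear DG"
    and H1: "\<And>v. DP v = 0 \<Longrightarrow> DG v = 0 \<Longrightarrow> v = 0"
    and H2: "\<And>u. \<exists>a b. DP a = 0 \<and> DG b = 0 \<and> u = a + b"
begin

lemma T_linear: "linear (Tab DP DG)"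
proof -
  interpret P: linear DP by (rule lP)
  interpret G: linear DG by (rule lG)
  interpret mP: linear "mp_pinv DP" by (rule mp_pinv_linear[OF lP])
  interpret mG: linear "mp_pinv DG" by (rule mp_pinv_linear[OF lG])
  show ?thesis
  proof (rule linearI)
    fix a b show "Tab DP DG (a + b) = Tab DP DG a + Tab DP DG b"
      unfolding Tab_def by (simp add: P.add G.add mP.add mG.add)
  next
    fix r b show "Tab DP DG (r *\<^sub>R b) = r *\<^sub>R Tab DP DG b"
      unfolding Tab_def by (simp add: P.scale G.scale mP.scale mG.scale algebra_simps)
  qed
qed

lemma T_inj0: assumes "Tab DP DG v = 0" shows "v = 0"
proof -
  interpret P: linear DP by (rule lP)
  interpret G: linear DG by (rule lG)
  define p where "p = mp_pinv DP (DP v)"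
  define q where "q = mp_pinv DG (DG v)"
  define r where "r = p - mp_pinv DG (DG p)"
  have DGr: "DG r = 0" unfolding r_def using mp_pinv_LML[OF lG, of p] by (simp add: G.diff)
  have qr: "q \<bullet> r = 0" unfolding q_def using Q_ker[OF lG DGr] .
  have "r + q = 0" using assms unfolding Tab_def r_def p_def q_def by simp
  hence rq: "r = - q" by (simp add: eq_neg_iff_add_eq_0)
  hence "r \<bullet> r = 0" using qr by (simp add: inner_commute)
  hence r0: "r = 0" by simp
  hence q0: "q = 0" using rq by simp
  have DGv: "DG v = 0" using mp_pinv_LML[OF lG, of v] q0 unfolding q_def by (simp add: G.zero)
  have pe: "p = mp_pinv DG (DG p)" using r0 unfolding r_def by simp
  have "p \<bullet> u = 0" for u
  proof -
    obtain a b where ab: "DP a = 0" "DG b = 0" "u = a + b" using H2 by blast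
    have "p \<bullet> a = 0" unfolding p_def by (rule Q_ker[OF lP ab(1)])
    moreover have "p \<bullet> b = 0" by (subst pe, rule Q_ker[OF lG ab(2)])
    ultimately show ?thesis using ab(3) by (simp add: inner_add_right)
  qed
  hence "p = 0" by (metis inner_eq_zero_iff)
  hence DPv: "DP v = 0" using mp_pinv_LML[OF lP, of v] unfolding p_def by (simp add: P.zero)
  show ?thesis using H1 DPv DGv .
qed

lemma T_inj: "inj (Tab DP DG)"
  using T_inj0 T_linear by (simp add: linear_inj_iff_eq_0)

lemma T_surj: "surj (Tab DP DG)"
  using T_inj T_linear linear_injective_imp_surjective by blast

lemma T_inv1: "inv (Tab DP DG) (Tab DP DG v) = v" using T_inj by (simp add: inv_f_f)
lemma T_inv2: "Tab DP DG (inv (Tab DP DG) v) = v" using T_surj by (simp add: surj_f_inv_f)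
lemma T_inv_linear: "linear (inv (Tab DP DG))"
  using T_inj T_linear inj_linear_imp_inv_linear by blast

lemma T_kerP: assumes "DP v = 0" "DG w = 0" shows "Tab DP DG v \<bullet> w = 0"
proof -
  interpret G: linear DG by (rule lG)
  interpret mG: linear "mp_pinv DG" by (rule mp_pinv_linear[OF lG])
  have "Tab DP DG v = mp_pinv DG (DG v)" unfolding Tab_def using Q_zero[OF lP assms(1)]
    by (simp add: G.zero mG.zero)
  thus ?thesis using Q_ker[OF lG assms(2)] by simp
qed

lemma T_kerG: assumes "DG v = 0" shows "DG (Tab DP DG v) = 0"
proof -
  interpret G: linear DG by (rule lG)
  show ?thesis unfolding Tab_def using Q_zero[OF lG assms] mp_pinv_LML[OF lG]
    by (simp add: G.diff G.add)
qed

end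

lemma rank_nullity:
  fixes f :: "'a::euclidean_space \<Rightarrow> 'b::euclidean_space"
  assumes lf: "linear f"
  shows "dim {x. f x = 0} + dim (range f) = DIM('a)"
proof -
  interpret linear f by fact
  define K where "K = {x. f x = 0}"
  define C where "C = {x. \<forall>k\<in>K. x \<bullet> k = 0}"
  have sK: "subspace K" unfolding K_def subspace_def by (simp add: add scale zero)
  have sC: "subspace C" unfolding C_def subspace_def by (simp add: inner_add_left)
  have KC: "K \<inter> C = {0}" unfolding K_def C_def by (auto simp: zero)
  have sum: "{x + y |x y. x \<in> K \<and> y \<in> C} = UNIV"
  proof -
    have "u \<in> {x + y |x y. x \<in> K \<and> y \<in> C}" for u
    proof -
      obtain a b where a: "a \<in> span K" and b: "\<And>w. w \<in> span K \<Longrightarrow> orthogonal b w" and ab: "u = a + b"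
        using orthogonal_subspace_decomp_exists by metis
      have "span K = K" using sK by (rule span_eq_iff[THEN iffD2])
      have aK: "a \<in> K" using a unfolding \<open>span K = K\<close> .
      have "b \<bullet> k = 0" if "k \<in> K" for k using b[of k] that \<open>span K = K\<close> by (simp add: orthogonal_def)
      hence bC: "b \<in> C" unfolding C_def by blast
      show ?thesis using ab aK bC by blast
    qed
    thus ?thesis by blast
  qed
  have d1: "dim K + dim C = DIM('a)"
    using dim_sums_Int[OF sK sC] sum KC by simp
  have rng: "range f = f ` C"
  proof
    show "range f \<subseteq> f ` C"
    proof
      fix y assume "y \<in> range f"
      then obtain u where u: "y = f u" by auto
      have "u \<in> {x + y |x y. x \<in> K \<and> y \<in> C}" using sum by simp
      then obtain k c where "k \<in> K" "c \<in> C" "u = k + c" by blast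
      hence "y = f c" using u unfolding K_def by (simp add: add)
      thus "y \<in> f ` C" using \<open>c \<in> C\<close> by blast
    qed
  qed auto
  have inj: "inj_on f (span C)"
  proof -
    have "inj_on f C"
    proof (rule inj_onI)
      fix x y assume xy: "x \<in> C" "y \<in> C" "f x = f y"
      hence "x - y \<in> K" unfolding K_def by (simp add: diff)
      moreover have "x - y \<in> C" using xy sC by (simp add: subspace_diff)
      ultimately have "x - y \<in> K \<inter> C" by blast
      thus "x = y" using KC by simp
    qed
    moreover have "span C = C" using sC by (rule span_eq_iff[THEN iffD2])
    ultimately show ?thesis by (simp only:)
  qed
  have "dim (f ` C) = dim C" using dim_image_eq[OF lf inj] .
  thus ?thesis using d1 rng unfolding K_def by simp
qed

theorem proposition5:
  fixes k :: nat
    and B M :: "(real^'n) set"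
    and G :: "real^'n \<Rightarrow> real^'m"
    and P g :: "real^'n \<Rightarrow> real^'n"
  assumes k_pos: "0 < k" and k_lt: "k < CARD('n)"
    and dim_m: "CARD('m) = CARD('n) - k"
    and B_open: "open B" and B_conn: "connected B"
    and M_sub: "M \<subseteq> B" and M_compact: "compact M" and M_conn: "connected M"
    and M_ne: "M \<noteq> {}"
    and g_smooth: "\<exists>U gext. open U \<and> M \<subseteq> U \<and> C1_on U gext \<and> (\<forall>x\<in>M. gext x = g x)"
    and g_tangent: "\<forall>x\<in>M. g x \<in> tangent_space M x"
    and A1_C1: "C1_on B G"
    and A1_subm: "\<forall>x\<in>B. surj (frechet_derivative G (at x))"
    and A1_zero: "{x\<in>B. G x = 0} = M"
    and A2_C1: "C1_on B P"
    and A2_into: "P ` B \<subseteq> M"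
    and A2_id: "\<forall>x\<in>M. P x = x"
    and A3: "\<forall>x\<in>B. {v. frechet_derivative P (at x) v = 0} \<inter> {v. frechet_derivative G (at x) v = 0} = {0}
              \<and> {a + b | a b. frechet_derivative P (at x) a = 0 \<and> frechet_derivative G (at x) b = 0} = UNIV"
  shows "(\<forall>x\<in>B. frechet_derivative P (at x) (f_h P G g x) = g (P x))
       \<and> (\<forall>x\<in>M. f_h P G g x = g x)"
proof -
  obtain P' where P': "\<forall>x\<in>B. (P has_derivative blinfun_apply (P' x)) (at x)"
    using A2_C1 unfolding C1_on_def by blast
  obtain G' where G': "\<forall>x\<in>B. (G has_derivative blinfun_apply (G' x)) (at x)"
    using A1_C1 unfolding C1_on_def by blast
  have hP: "(P has_derivative frechet_derivative P (at x)) (at x)" if "x \<in> B" for x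
  proof -
    have d: "(P has_derivative blinfun_apply (P' x)) (at x)" using P' that by blast
    have "blinfun_apply (P' x) = frechet_derivative P (at x)" using d by (rule frechet_derivative_at)
    thus ?thesis using d by simp
  qed
  have hG: "(G has_derivative frechet_derivative G (at x)) (at x)" if "x \<in> B" for x
  proof -
    have d: "(G has_derivative blinfun_apply (G' x)) (at x)" using G' that by blast
    have "blinfun_apply (G' x) = frechet_derivative G (at x)" using d by (rule frechet_derivative_at)
    thus ?thesis using d by simp
  qed
  have lP: "linear (frechet_derivative P (at x))" if "x \<in> B" for x
    using has_derivative_linear[OF hP[OF that]] .
  have lG: "linear (frechet_derivative G (at x))" if "x \<in> B" for x
    using has_derivative_linear[OF hG[OF that]] .
  have PM: "P x \<in> M" if "x \<in> B" for x using A2_into that by blast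
  have PB: "P x \<in> B" if "x \<in> B" for x using PM[OF that] M_sub by blast
  have PP: "frechet_derivative P (at (P x)) (frechet_derivative P (at x) v) = frechet_derivative P (at x) v"
    if x: "x \<in> B" for x v
  proof -
    have "((P \<circ> P) has_derivative (frechet_derivative P (at (P x)) \<circ> frechet_derivative P (at x))) (at x)"
      by (rule diff_chain_at[OF hP[OF x] hP[OF PB[OF x]]])
    hence "(P has_derivative (frechet_derivative P (at (P x)) \<circ> frechet_derivative P (at x))) (at x)"
      by (rule has_derivative_transform_within_open[OF _ B_open x]) (simp add: A2_id PM)
    hence "frechet_derivative P (at (P x)) \<circ> frechet_derivative P (at x) = frechet_derivative P (at x)"
      by (rule frechet_derivative_at)
    from fun_cong[OF this, of v] show ?thesis by simp
  qed
  have GP: "frechet_derivative G (at (P x)) (frechet_derivative P (at x) v) = 0"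
    if x: "x \<in> B" for x v
  proof -
    have "((G \<circ> P) has_derivative (frechet_derivative G (at (P x)) \<circ> frechet_derivative P (at x))) (at x)"
      by (rule diff_chain_at[OF hP[OF x] hG[OF PB[OF x]]])
    hence "((\<lambda>_. 0) has_derivative (frechet_derivative G (at (P x)) \<circ> frechet_derivative P (at x))) (at x)"
      by (rule has_derivative_transform_within_open[OF _ B_open x]) (use A1_zero PM PB in auto)
    hence e1: "frechet_derivative G (at (P x)) \<circ> frechet_derivative P (at x) = frechet_derivative (\<lambda>_. 0::real^'m) (at x)"
      by (rule frechet_derivative_at)
    have "((\<lambda>_. 0::real^'m) has_derivative (\<lambda>_. 0)) (at x)" by simp
    hence e2: "(\<lambda>_. 0::real^'m) = frechet_derivative (\<lambda>_. 0::real^'m) (at x)"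
      by (rule frechet_derivative_at)
    from fun_cong[OF e1[folded e2], of v] show ?thesis by simp
  qed
  have tang: "frechet_derivative P (at z) (g z) = g z" if z: "z \<in> M" for z
  proof -
    obtain \<gamma> :: "real \<Rightarrow> real^'n" where g0: "\<gamma> 0 = z" and gM: "\<forall>t. \<gamma> t \<in> M"
      and gd: "(\<gamma> has_vector_derivative g z) (at 0)"
      using g_tangent z unfolding tangent_space_def by blast
    have zB: "z \<in> B" using z M_sub by blast
    have "(P has_derivative frechet_derivative P (at z)) (at (\<gamma> 0) within \<gamma> ` UNIV)"
      using hP[OF zB] g0 by (simp add: has_derivative_at_withinI)
    hence "((P \<circ> \<gamma>) has_vector_derivative frechet_derivative P (at z) (g z)) (at 0 within UNIV)"
      using vector_derivative_diff_chain_within[of \<gamma> "g z" 0 UNIV P] gd by simp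
    moreover have "P \<circ> \<gamma> = \<gamma>" using gM A2_id by (simp add: fun_eq_iff)
    ultimately show ?thesis using gd vector_derivative_unique_at by fastforce
  qed
  have TS: "Tsetup (frechet_derivative P (at x)) (frechet_derivative G (at x))" if x: "x \<in> B" for x
  proof (rule Tsetup.intro)
    show "linear (frechet_derivative P (at x))" by (rule lP[OF x])
    show "linear (frechet_derivative G (at x))" by (rule lG[OF x])
  next
    fix v assume "frechet_derivative P (at x) v = 0" "frechet_derivative G (at x) v = 0"
    thus "v = 0" using A3 x by blast
  next
    fix u
    have "u \<in> {a + b | a b. frechet_derivative P (at x) a = 0 \<and> frechet_derivative G (at x) b = 0}"
      using A3 x by blast
    thus "\<exists>a b. frechet_derivative P (at x) a = 0 \<and> frechet_derivative G (at x) b = 0 \<and> u = a + b"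
      by blast
  qed
  have dimP: "dim (range (frechet_derivative P (at x))) = CARD('n) - CARD('m)" if x: "x \<in> B" for x
  proof -
    let ?KP = "{v. frechet_derivative P (at x) v = 0}"
    let ?KG = "{v. frechet_derivative G (at x) v = 0}"
    have r1: "dim ?KP + dim (range (frechet_derivative P (at x))) = CARD('n)"
      using rank_nullity[OF lP[OF x]] by simp
    have r2: "dim ?KG + dim (range (frechet_derivative G (at x))) = CARD('n)"
      using rank_nullity[OF lG[OF x]] by simp
    have "range (frechet_derivative G (at x)) = UNIV" using A1_subm x by blast
    hence r3: "dim ?KG + CARD('m) = CARD('n)" using r2 by simp
    have sP: "subspace ?KP" using lP[OF x] unfolding subspace_def by (simp add: linear_add linear_scale linear_0)
    have sG: "subspace ?KG" using lG[OF x] unfolding subspace_def by (simp add: linear_add linear_scale linear_0)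
    have "dim {a + b |a b. a \<in> ?KP \<and> b \<in> ?KG} + dim (?KP \<inter> ?KG) = dim ?KP + dim ?KG"
      by (rule dim_sums_Int[OF sP sG])
    moreover have "{a + b |a b. a \<in> ?KP \<and> b \<in> ?KG} = UNIV" using A3 x by simp
    moreover have "?KP \<inter> ?KG = {0}" using A3 x by blast
    ultimately have "dim ?KP + dim ?KG = CARD('n)" by simp
    thus ?thesis using r1 r3 by linarith
  qed
  have rngeq: "range (frechet_derivative P (at x)) = range (frechet_derivative P (at (P x)))"
    if x: "x \<in> B" for x
  proof (rule subspace_dim_equal)
    show "subspace (range (frechet_derivative P (at x)))"
      by (simp add: linear_subspace_image lP[OF x])
    show "subspace (range (frechet_derivative P (at (P x))))"
      by (simp add: linear_subspace_image lP[OF PB[OF x]])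
    show "range (frechet_derivative P (at x)) \<subseteq> range (frechet_derivative P (at (P x)))"
    proof (rule subsetI)
      fix y assume "y \<in> range (frechet_derivative P (at x))"
      then obtain v where "y = frechet_derivative P (at x) v" by blast
      hence "y = frechet_derivative P (at (P x)) (frechet_derivative P (at x) v)" using PP[OF x] by simp
      thus "y \<in> range (frechet_derivative P (at (P x)))" by simp
    qed
    show "dim (range (frechet_derivative P (at (P x)))) \<le> dim (range (frechet_derivative P (at x)))"
      using dimP[OF x] dimP[OF PB[OF x]] by simp
  qed
  have fh: "f_h P G g x = inv (Tmap P G x) (mp_pinv (Tmap P G (P x) \<circ> frechet_derivative P (at x) \<circ> inv (Tmap P G x))
       (Tmap P G (P x) (g (P x))))" for x
    unfolding f_h_def Let_def ..
  have part1: "frechet_derivative P (at x) (f_h P G g x) = g (P x)" if x: "x \<in> B" for x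
  proof -
    let ?DP = "frechet_derivative P (at x)"
    let ?Tx = "Tmap P G x" and ?Tz = "Tmap P G (P x)"
    let ?A = "?Tz \<circ> ?DP \<circ> inv ?Tx"
    interpret tx: Tsetup "frechet_derivative P (at x)" "frechet_derivative G (at x)" by (rule TS[OF x])
    interpret tz: Tsetup "frechet_derivative P (at (P x))" "frechet_derivative G (at (P x))" by (rule TS[OF PB[OF x]])
    have lA: "linear ?A" unfolding Tmap_Tab
      by (intro linear_compose tx.T_inv_linear tz.T_linear lP x)
    have "g (P x) \<in> range (frechet_derivative P (at (P x)))" by (rule image_eqI[where x="g (P x)" and f="frechet_derivative P (at (P x))", OF tang[OF PM[OF x], symmetric] UNIV_I])
    then obtain u where u: "g (P x) = ?DP u" using rngeq[OF x] by auto
    have yA: "?Tz (g (P x)) = ?A (?Tx u)" using u tx.T_inv1 unfolding Tmap_Tab by simp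
    have "?A (mp_pinv ?A (?Tz (g (P x)))) = ?Tz (g (P x))"
      using mp_pinv_LML[OF lA, of "?Tx u"] yA by simp
    hence "?Tz (?DP (f_h P G g x)) = ?Tz (g (P x))" unfolding fh by simp
    thus ?thesis using tz.T_inj unfolding Tmap_Tab by (simp add: inj_eq)
  qed
  have part2: "f_h P G g x = g x" if xM: "x \<in> M" for x
  proof -
    have x: "x \<in> B" using xM M_sub by blast
    have Px: "P x = x" using A2_id xM by blast
    let ?DP = "frechet_derivative P (at x)" and ?DG = "frechet_derivative G (at x)"
    let ?T = "Tab ?DP ?DG"
    let ?A = "?T \<circ> ?DP \<circ> inv ?T"
    interpret tx: Tsetup "frechet_derivative P (at x)" "frechet_derivative G (at x)" by (rule TS[OF x])
    interpret dp: linear ?DP by (rule lP[OF x])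
    interpret T: linear ?T by (rule tx.T_linear)
    have idem: "?DP (?DP v) = ?DP v" for v using PP[OF x, of v] Px by simp
    have gp: "?DG (?DP v) = 0" for v using GP[OF x, of v] Px by simp
    have lA: "linear ?A" by (intro linear_compose tx.T_inv_linear tx.T_linear lP x)
    have Aidem: "?A (?A y) = ?A y" for y using idem by (simp add: tx.T_inv1)
    have key: "?T (?DP a) \<bullet> ?T b = ?T (?DP a) \<bullet> ?T (?DP b)" for a b
    proof -
      have "?T b = ?T (?DP b) + ?T (b - ?DP b)" by (simp add: T.add[symmetric])
      moreover have "?T (b - ?DP b) \<bullet> ?T (?DP a) = 0"
        by (rule tx.T_kerP) (simp_all add: dp.diff idem tx.T_kerG gp)
      ultimately show ?thesis by (simp add: inner_add_right inner_commute)
    qed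
    have Asym: "?A y \<bullet> w = y \<bullet> ?A w" for y w
    proof -
      from surjD[OF tx.T_surj] obtain a where a: "y = ?T a" by blast
      from surjD[OF tx.T_surj] obtain b where b: "w = ?T b" by blast
      have "?A y \<bullet> w = ?T (?DP a) \<bullet> ?T b" using a b by (simp add: tx.T_inv1)
      also have "\<dots> = ?T (?DP a) \<bullet> ?T (?DP b)" by (rule key)
      also have "\<dots> = ?T (?DP b) \<bullet> ?T a" using key[of b a] by (simp add: inner_commute)
      also have "\<dots> = y \<bullet> ?A w" using a b by (simp add: tx.T_inv1 inner_commute)
      finally show ?thesis .
    qed
    have mpA: "mp_pinv ?A y = ?A y" for y by (rule mp_pinv_proj[OF lA Aidem Asym])
    have "f_h P G g x = inv ?T (?A (?T (g x)))" unfolding fh Px Tmap_Tab mpA ..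
    also have "\<dots> = ?DP (g x)" by (simp add: tx.T_inv1)
    also have "\<dots> = g x" using tang[OF xM] .
    finally show ?thesis .
  qed
  show ?thesis using part1 part2 by blast
qed

end
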